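(* Consider the liquid democracy game with complete information about types. Let $n_A,n_B$ be the numbers of partisans for $A$ and for $B$, $n_e$ the number of independent voters with precision $q_i=1$, and $n_U$ the number of independent voters with precision $q_i<1$. Suppose $n_e\ge 1$, $n_U\ge n_e+|n_A-n_B|+1$, and $\max(n_e+n_A,\ n_e+n_B)\le N/2$. Then the election game with delegation is dominance solvable (by iterated elimination of weakly dominated strategies), and the dominance-solvable outcome is the efficient outcome.
   Context: Voters $\mathcal N=\{1,\dots,N\}$ choose between alternatives $A$ and $B$ by simple majority of votes cast, ties broken uniformly at random. Unknown state $\omega\in\{a,b\}$ with common prior $\Pr(\omega=a)=\pi\in(0,1)$. Each voter $i$ has preference $p_i\in\{A,B,I\}$ and precision $q_i\in[1/2,1]$, commonly known. An independent ($p_i=I$) gets payoff 1 if the outcome matches the state ($A$ with $a$, $B$ with $b$), else 0; a partisan with $p_i=A$ (resp. $B$) gets 1 iff the outcome is $A$ (resp. $B$). Voter $i$ observes a private signal $s_i\in\{a,b\}$ with $\Pr(s_i=\omega\mid\omega)=q_i$, conditionally independent. In liquid democracy a (pure) strategy of voter $i$ maps her signal to one of: vote for $A$, vote for $B$, abstain, or delegate to another voter $j$; delegation is transitive, votes held by voters in a delegation cycle are abstained, and a non-delegating voter casts all votes she holds (own plus delegated) for the same alternative or abstains them all. The efficient outcome is the one maximizing the probability that the election outcome matches the state. *)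

theory Defs
  imports "HOL-Analysis.Analysis"
begin

(* Preferences: partisan for A, partisan for B, independent *)
datatype pref = PA | PB | PI

datatype action = VoteA | VoteB | Abstain | Delegate nat

(* Voters are 0..N-1.  A signal / state is a bool: True = a, False = b.
   A pure strategy maps the own signal to an action. *)
type_synonym strategy = "bool \<Rightarrow> action"

definition valid_action :: "nat \<Rightarrow> nat \<Rightarrow> action \<Rightarrow> bool" where
  "valid_action N i a = (case a of Delegate j \<Rightarrow> j < N \<and> j \<noteq> i | _ \<Rightarrow> True)"

definition all_strategies :: "nat \<Rightarrow> nat \<Rightarrow> strategy set" where
  "all_strategies N i = {f. \<forall>b. valid_action N i (f b)}"

definition next_voter :: "(nat \<Rightarrow> action) \<Rightarrow> nat \<Rightarrow> nat" where
  "next_voter act i = (case act i of Delegate j \<Rightarrow> j | _ \<Rightarrow> i)"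

(* Transitive delegation: after N steps, either a non-delegating voter is reached
   (who casts the vote), or the voter is in / leads into a cycle, and then the
   reached voter is a delegator: the vote is abstained. *)
definition final_action :: "nat \<Rightarrow> (nat \<Rightarrow> action) \<Rightarrow> nat \<Rightarrow> action" where
  "final_action N act i = act ((next_voter act ^^ N) i)"

definition votesA :: "nat \<Rightarrow> (nat \<Rightarrow> action) \<Rightarrow> nat" where
  "votesA N act = card {i. i < N \<and> final_action N act i = VoteA}"

definition votesB :: "nat \<Rightarrow> (nat \<Rightarrow> action) \<Rightarrow> nat" where
  "votesB N act = card {i. i < N \<and> final_action N act i = VoteB}"

definition probA :: "nat \<Rightarrow> (nat \<Rightarrow> action) \<Rightarrow> real" where
  "probA N act = (if votesA N act > votesB N act then 1
                  else if votesA N act < votesB N act then 0 else 1/2)"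

definition joint_prob :: "nat \<Rightarrow> real \<Rightarrow> (nat \<Rightarrow> real) \<Rightarrow> bool \<Rightarrow> (nat \<Rightarrow> bool) \<Rightarrow> real" where
  "joint_prob N \<pi> q w s =
     (if w then \<pi> else 1 - \<pi>) * (\<Prod>i<N. if s i = w then q i else 1 - q i)"

definition signal_profiles :: "nat \<Rightarrow> (nat \<Rightarrow> bool) set" where
  "signal_profiles N = PiE {..<N} (\<lambda>_. UNIV)"

definition expect :: "nat \<Rightarrow> real \<Rightarrow> (nat \<Rightarrow> real) \<Rightarrow> (nat \<Rightarrow> strategy)
                      \<Rightarrow> (bool \<Rightarrow> real \<Rightarrow> real) \<Rightarrow> real" where
  "expect N \<pi> q \<sigma> g =
     (\<Sum>w\<in>(UNIV::bool set). \<Sum>s\<in>signal_profiles N.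
        joint_prob N \<pi> q w s * g w (probA N (\<lambda>i. \<sigma> i (s i))))"

definition efficiency :: "nat \<Rightarrow> real \<Rightarrow> (nat \<Rightarrow> real) \<Rightarrow> (nat \<Rightarrow> strategy) \<Rightarrow> real" where
  "efficiency N \<pi> q \<sigma> = expect N \<pi> q \<sigma> (\<lambda>w pA. if w then pA else 1 - pA)"

definition payoff :: "nat \<Rightarrow> real \<Rightarrow> (nat \<Rightarrow> pref) \<Rightarrow> (nat \<Rightarrow> real) \<Rightarrow> nat
                      \<Rightarrow> (nat \<Rightarrow> strategy) \<Rightarrow> real" where
  "payoff N \<pi> p q i \<sigma> =
     (case p i of
        PA \<Rightarrow> expect N \<pi> q \<sigma> (\<lambda>w pA. pA)
      | PB \<Rightarrow> expect N \<pi> q \<sigma> (\<lambda>w pA. 1 - pA)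
      | PI \<Rightarrow> efficiency N \<pi> q \<sigma>)"

definition profiles :: "nat \<Rightarrow> (nat \<Rightarrow> strategy set) \<Rightarrow> (nat \<Rightarrow> strategy) set" where
  "profiles N S = PiE {..<N} S"

definition weakly_dominates ::
  "nat \<Rightarrow> real \<Rightarrow> (nat \<Rightarrow> pref) \<Rightarrow> (nat \<Rightarrow> real) \<Rightarrow> (nat \<Rightarrow> strategy set)
   \<Rightarrow> nat \<Rightarrow> strategy \<Rightarrow> strategy \<Rightarrow> bool" where
  "weakly_dominates N \<pi> p q S i y x =
     ((\<forall>\<sigma>\<in>profiles N S. payoff N \<pi> p q i (\<sigma>(i := x)) \<le> payoff N \<pi> p q i (\<sigma>(i := y)))
    \<and> (\<exists>\<sigma>\<in>profiles N S. payoff N \<pi> p q i (\<sigma>(i := x)) < payoff N \<pi> p q i (\<sigma>(i := y))))"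

definition elim_step ::
  "nat \<Rightarrow> real \<Rightarrow> (nat \<Rightarrow> pref) \<Rightarrow> (nat \<Rightarrow> real) \<Rightarrow> (nat \<Rightarrow> strategy set)
   \<Rightarrow> (nat \<Rightarrow> strategy set)" where
  "elim_step N \<pi> p q S =
     (\<lambda>i. {x \<in> S i. \<not> (\<exists>y\<in>S i. weakly_dominates N \<pi> p q S i y x)})"

definition reduced_game ::
  "nat \<Rightarrow> real \<Rightarrow> (nat \<Rightarrow> pref) \<Rightarrow> (nat \<Rightarrow> real) \<Rightarrow> nat \<Rightarrow> (nat \<Rightarrow> strategy set)" where
  "reduced_game N \<pi> p q k = (elim_step N \<pi> p q ^^ k) (all_strategies N)"

(* Dominance solvability (Moulin): iterated elimination reaches a reduced game
   (a fixed point of the elimination) in which every voter is indifferent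
   among all remaining strategy profiles. *)
definition dominance_solvable_at ::
  "nat \<Rightarrow> real \<Rightarrow> (nat \<Rightarrow> pref) \<Rightarrow> (nat \<Rightarrow> real) \<Rightarrow> nat \<Rightarrow> bool" where
  "dominance_solvable_at N \<pi> p q k =
     (elim_step N \<pi> p q (reduced_game N \<pi> p q k) = reduced_game N \<pi> p q k
      \<and> profiles N (reduced_game N \<pi> p q k) \<noteq> {}
      \<and> (\<forall>i<N. \<forall>\<sigma>\<in>profiles N (reduced_game N \<pi> p q k).
            \<forall>\<tau>\<in>profiles N (reduced_game N \<pi> p q k).
              payoff N \<pi> p q i \<sigma> = payoff N \<pi> p q i \<tau>))"

definition efficient ::
  "nat \<Rightarrow> real \<Rightarrow> (nat \<Rightarrow> real) \<Rightarrow> (nat \<Rightarrow> strategy) \<Rightarrow> bool" where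
  "efficient N \<pi> q \<sigma> =
     (\<forall>\<tau>\<in>profiles N (all_strategies N). efficiency N \<pi> q \<tau> \<le> efficiency N \<pi> q \<sigma>)"

end

theory Submission
  imports Defs
begin


definition V :: "bool \<Rightarrow> action" where "V b = (if b then VoteA else VoteB)"
definition isdel :: "action \<Rightarrow> bool" where "isdel a = (case a of Delegate j \<Rightarrow> True | _ \<Rightarrow> False)"
definition cnt :: "nat \<Rightarrow> (nat \<Rightarrow> action) \<Rightarrow> bool \<Rightarrow> nat" where
  "cnt N act t = card {k. k < N \<and> final_action N act k = V t}"
definition sc :: "nat \<Rightarrow> (nat \<Rightarrow> action) \<Rightarrow> bool \<Rightarrow> real" where
  "sc N act t = (if t then probA N act else 1 - probA N act)"
definition eff :: "(nat \<Rightarrow> action) \<Rightarrow> nat \<Rightarrow> action" where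
  "eff act k = (case act k of Delegate j \<Rightarrow> act j | a \<Rightarrow> a)"

lemma V_nd[simp]: "\<not> isdel (V b)" by (simp add: V_def isdel_def)
lemma V_inj[simp]: "(V a = V b) = (a = b)" by (simp add: V_def)
lemma V_ne[simp]: "V b \<noteq> Abstain" "V b \<noteq> Delegate j" "Abstain \<noteq> V b" "Delegate j \<noteq> V b"
  by (auto simp: V_def)
lemma isdel_simps[simp]: "\<not> isdel Abstain" "\<not> isdel VoteA" "\<not> isdel VoteB" "isdel (Delegate j)"
  by (auto simp: isdel_def)

lemma sc_eq: "sc N act t = (if cnt N act t > cnt N act (\<not>t) then 1
   else if cnt N act t < cnt N act (\<not>t) then 0 else 1/2)"
  by (cases t) (auto simp: sc_def probA_def cnt_def votesA_def votesB_def V_def)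

lemma next_nondel: "\<not> isdel (act k) \<Longrightarrow> next_voter act k = k"
  by (cases "act k") (auto simp: next_voter_def isdel_def)

lemma next_del: "act k = Delegate j \<Longrightarrow> next_voter act k = j"
  by (simp add: next_voter_def)

lemma pow_fix: "f k = k \<Longrightarrow> (f ^^ n) k = k" by (induction n) auto

lemma final_nondel: "\<not> isdel (act k) \<Longrightarrow> final_action N act k = act k"
  unfolding final_action_def using pow_fix[of "next_voter act" k] next_nondel by metis

lemma final_del1:
  assumes "act k = Delegate j" "\<not> isdel (act j)" "0 < N"
  shows "final_action N act k = act j"
proof -
  obtain n where N: "N = Suc n" using assms(3) by (cases N) auto
  have "(next_voter act ^^ N) k = (next_voter act ^^ n) (next_voter act k)"
    unfolding N by (simp add: funpow_Suc_right del: funpow.simps)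
  also have "\<dots> = j" using next_del[of act k j, OF assms(1)] pow_fix next_nondel[of act j, OF assms(2)] by metis
  finally show ?thesis by (simp add: final_action_def)
qed

lemma final_eff:
  assumes "0 < N" "\<not> isdel (act k) \<or> (\<exists>j. act k = Delegate j \<and> \<not> isdel (act j))"
  shows "final_action N act k = eff act k"
  using assms final_nondel final_del1
  by (cases "act k") (auto simp: eff_def)

lemma path_agree:
  assumes "\<forall>x. x \<noteq> i \<longrightarrow> f' x = f x" "\<forall>t<n. (f ^^ t) k \<noteq> i"
  shows "(f' ^^ n) k = (f ^^ n) k"
  using assms(2)
proof (induction n)
  case 0 then show ?case by simp
next
  case (Suc n)
  then have "(f' ^^ n) k = (f ^^ n) k" by auto
  moreover have "(f ^^ n) k \<noteq> i" using Suc.prems by auto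
  ultimately show ?case using assms(1) by simp
qed

lemma next_upd: "x \<noteq> i \<Longrightarrow> next_voter (act(i:=a)) x = next_voter act x"
  by (simp add: next_voter_def)

lemma final_upd:
  assumes "\<not> isdel a"
  shows "final_action N (act(i:=a)) k = final_action N act k \<or> final_action N (act(i:=a)) k = a"
proof -
  let ?f = "next_voter act" and ?g = "next_voter (act(i:=a))"
  have ag: "\<forall>x. x \<noteq> i \<longrightarrow> ?g x = ?f x" using next_upd by metis
  have gi: "?g i = i" using next_nondel[of "act(i:=a)" i] assms by simp
  show ?thesis
  proof (cases "\<exists>t\<le>N. (?f ^^ t) k = i")
    case True
    then obtain t where t: "t \<le> N" "(?f ^^ t) k = i" "\<forall>m<t. \<not> (m \<le> N \<and> (?f ^^ m) k = i)"
      using exists_least_iff[of "\<lambda>t. t \<le> N \<and> (?f ^^ t) k = i"] by blast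
    have "(?g ^^ t) k = i" using path_agree[OF ag, of t k] t by auto
    hence "(?g ^^ (N - t + t)) k = i" using pow_fix[of ?g i "N - t", OF gi] by (simp add: funpow_add)
    hence "(?g ^^ N) k = i" using t(1) by simp
    then show ?thesis by (simp add: final_action_def)
  next
    case False
    hence "(?g ^^ N) k = (?f ^^ N) k" using path_agree[OF ag, of N k] by auto
    moreover have "(?f ^^ N) k \<noteq> i" using False by auto
    ultimately show ?thesis by (simp add: final_action_def)
  qed
qed

definition validp :: "nat \<Rightarrow> (nat \<Rightarrow> action) \<Rightarrow> bool" where
  "validp N act = (\<forall>x<N. valid_action N x (act x))"

lemma valid_path:
  assumes "validp N act" "k < N"
  shows "(next_voter act ^^ n) k < N"
proof (induction n)
  case 0 then show ?case using assms by simp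
next
  case (Suc n)
  let ?x = "(next_voter act ^^ n) k"
  have "valid_action N ?x (act ?x)" using assms(1) Suc validp_def by blast
  have "next_voter act ?x < N" using Suc \<open>valid_action N ?x (act ?x)\<close>
    by (cases "act ?x") (auto simp: next_del next_nondel valid_action_def)
  then show ?case by simp
qed

lemma orbit_repeat:
  assumes "validp N act" "k < N"
  shows "\<exists>t<N. (next_voter act ^^ t) k = (next_voter act ^^ N) k"
proof -
  let ?f = "next_voter act"
  let ?h = "\<lambda>t. (?f ^^ t) k"
  have "\<not> inj_on ?h {..N}"
  proof
    assume "inj_on ?h {..N}"
    hence "card {..N} \<le> card {..<N}"
      by (rule card_inj_on_le) (use valid_path[OF assms] in auto)
    then show False by simp
  qed
  then obtain a b where ab: "a \<le> N" "b \<le> N" "a \<noteq> b" "?h a = ?h b"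
    unfolding inj_on_def by auto
  have gen: "?h x = ?h y \<Longrightarrow> x < y \<Longrightarrow> y \<le> N \<Longrightarrow> ?h (x + (N - y)) = ?h N" for x y
  proof -
    assume h: "?h x = ?h y" "x < y" "y \<le> N"
    have "?h (x + (N - y)) = (?f ^^ (N - y)) (?h x)" by (metis add.commute comp_apply funpow_add)
    also have "\<dots> = (?f ^^ (N - y)) (?h y)" using h by simp
    also have "\<dots> = ?h (N - y + y)" by (simp add: funpow_add)
    finally show ?thesis using h by simp
  qed
  show ?thesis
  proof (cases "a < b")
    case True then show ?thesis using gen[of a b] ab by (intro exI[of _ "a + (N - b)"]) auto
  next
    case False
    hence "b < a" using ab by auto
    then show ?thesis using gen[of b a] ab by (intro exI[of _ "b + (N - a)"]) auto
  qed
qed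

lemma final_deleg:
  assumes val: "validp N act" and kN: "k < N"
    and ai: "act i = Delegate j" and aj: "\<not> isdel (act j)" and ji: "j \<noteq> i"
  shows "final_action N act k = final_action N (act(i := act j)) k"
proof -
  let ?f = "next_voter act" and ?g = "next_voter (act(i:=act j))"
  have ag: "\<forall>x. x \<noteq> i \<longrightarrow> ?g x = ?f x" using next_upd by metis
  have gi: "?g i = i" using next_nondel[of "act(i:=act j)" i] aj by simp
  have fi: "?f i = j" using next_del[of act i j, OF ai] .
  have fj: "?f j = j" using next_nondel[of act j, OF aj] .
  show ?thesis
  proof (cases "\<exists>t<N. (?f ^^ t) k = i")
    case True
    then obtain t where t: "t < N" "(?f ^^ t) k = i" "\<forall>m<t. \<not> (m < N \<and> (?f ^^ m) k = i)"
      using exists_least_iff[of "\<lambda>t. t < N \<and> (?f ^^ t) k = i"] by blast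
    have "(?g ^^ t) k = i" using path_agree[OF ag, of t k] t by auto
    hence "(?g ^^ (N - t + t)) k = i" using pow_fix[of ?g i "N - t", OF gi] by (simp add: funpow_add)
    hence g: "(?g ^^ N) k = i" using t(1) by simp
    have "(?f ^^ Suc t) k = j" using t fi by simp
    hence "(?f ^^ (N - Suc t + Suc t)) k = j" using pow_fix[of ?f j "N - Suc t", OF fj]
      by (metis comp_apply funpow_add)
    hence "(?f ^^ N) k = j" using t(1) by simp
    then show ?thesis using g by (simp add: final_action_def)
  next
    case False
    hence "(?g ^^ N) k = (?f ^^ N) k" using path_agree[OF ag, of N k] by auto
    moreover have "(?f ^^ N) k \<noteq> i" using False orbit_repeat[OF val kN] by metis
    ultimately show ?thesis by (simp add: final_action_def)
  qed
qed

lemma final_far: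
  assumes val: "validp N act" and kN: "k < N" and iN: "N \<le> i"
  shows "final_action N (act(i:=a)) k = final_action N act k"
proof -
  let ?f = "next_voter act" and ?g = "next_voter (act(i:=a))"
  have ag: "\<forall>x. x \<noteq> i \<longrightarrow> ?g x = ?f x" using next_upd by metis
  have lt: "\<And>t. (?f ^^ t) k < N" using valid_path[OF val kN] .
  have "(?g ^^ N) k = (?f ^^ N) k" using path_agree[OF ag, of N k] lt iN
    by (metis leD)
  moreover have "(?f ^^ N) k \<noteq> i" using lt iN by (metis leD)
  ultimately show ?thesis by (simp add: final_action_def)
qed




lemma cnt_mono:
  "cnt N act t \<le> cnt N (act(i := V t)) t" "cnt N (act(i := V t)) (\<not>t) \<le> cnt N act (\<not>t)"
proof -
  have h: "\<And>k. final_action N (act(i:=V t)) k = final_action N act k \<or> final_action N (act(i:=V t)) k = V t"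
    using final_upd[of "V t"] by simp
  show "cnt N act t \<le> cnt N (act(i := V t)) t" unfolding cnt_def
    by (rule card_mono) (auto, metis h)
  show "cnt N (act(i := V t)) (\<not>t) \<le> cnt N act (\<not>t)" unfolding cnt_def
    by (rule card_mono) (auto, metis h V_inj)
qed

lemma score_mono: "(a::nat) \<le> a' \<Longrightarrow> b' \<le> b \<Longrightarrow>
  (if a > b then 1 else if a < b then 0 else 1/2) \<le> (if a' > b' then 1 else if a' < b' then (0::real) else 1/2)"
  by (cases "b < a"; cases "a < b"; cases "b' < a'"; cases "a' < b'"; simp; linarith)

lemma sc_upd_ge: "sc N act t \<le> sc N (act(i := V t)) t"
  using score_mono[OF cnt_mono(1)[where N=N and act=act and t=t and i=i] cnt_mono(2)[where N=N and act=act and t=t and i=i]]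
  by (simp only: sc_eq)

lemma W1: "sc N (act(i:=b)) t \<le> sc N (act(i := V t)) t"
  using sc_upd_ge[of N "act(i:=b)" t i] by simp

lemma sc_le1: "sc N act t \<le> 1" by (simp add: sc_eq)
lemma sc_ge0: "0 \<le> sc N act t" by (simp add: sc_eq)

lemma cnt_cong: "(\<And>k. k < N \<Longrightarrow> final_action N act k = final_action N act' k) \<Longrightarrow> cnt N act t = cnt N act' t"
  unfolding cnt_def by (rule arg_cong[where f=card]) auto

lemma sc_cong: "(\<And>k. k < N \<Longrightarrow> final_action N act k = final_action N act' k) \<Longrightarrow> sc N act t = sc N act' t"
proof -
  assume h: "\<And>k. k < N \<Longrightarrow> final_action N act k = final_action N act' k"
  have "cnt N act t = cnt N act' t" "cnt N act (\<not>t) = cnt N act' (\<not>t)" using cnt_cong[OF h] by blast+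
  then show ?thesis by (simp only: sc_eq)
qed

lemma W2:
  assumes val: "validp N act" and iN: "i < N" and jN: "j < N" and ji: "j \<noteq> i" and aj: "act j = V t"
  shows "sc N (act(i:=b)) t \<le> sc N (act(i := Delegate j)) t"
proof -
  have v2: "validp N (act(i := Delegate j))" using val jN ji unfolding validp_def valid_action_def by auto
  have "final_action N (act(i := Delegate j)) k = final_action N (act(i := V t)) k" if k: "k < N" for k
  proof -
    have "final_action N (act(i := Delegate j)) k = final_action N ((act(i := Delegate j))(i := (act(i := Delegate j)) j)) k"
      by (rule final_deleg[OF v2 k]) (use ji aj in auto)
    then show ?thesis using ji aj by simp
  qed
  hence "sc N (act(i := Delegate j)) t = sc N (act(i := V t)) t" by (rule sc_cong)
  then show ?thesis using W1 by simp
qed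

lemma far_sc:
  assumes val: "validp N act" and iN: "N \<le> i"
  shows "sc N (act(i:=a)) t = sc N act t"
  by (rule sc_cong) (use final_far[OF val _ iN] in auto)

definition good :: "(nat \<Rightarrow> action) \<Rightarrow> nat \<Rightarrow> bool" where
  "good act k = (\<not> isdel (act k) \<or> (\<exists>j. act k = Delegate j \<and> \<not> isdel (act j)))"

lemma cnt_eff:
  assumes "\<And>k. k < N \<Longrightarrow> good act k"
  shows "cnt N act t = card {k. k < N \<and> eff act k = V t}"
  unfolding cnt_def
  by (rule arg_cong[where f=card]) (use final_eff assms good_def in \<open>auto\<close>)

lemma joint_nonneg:
  assumes "0 \<le> \<pi>" "\<pi> \<le> 1" "\<forall>k<N. 0 \<le> q k \<and> q k \<le> 1"
  shows "0 \<le> joint_prob N \<pi> q w s"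
  unfolding joint_prob_def using assms by (auto intro!: mult_nonneg_nonneg prod_nonneg)

lemma joint_pos:
  assumes "0 < \<pi>" "\<pi> < 1" "\<forall>k<N. 0 < q k" "\<forall>k<N. s k \<noteq> w \<longrightarrow> q k < 1"
  shows "0 < joint_prob N \<pi> q w s"
  unfolding joint_prob_def using assms by (auto intro!: mult_pos_pos prod_pos)

lemma joint_expert:
  assumes "joint_prob N \<pi> q w s \<noteq> 0" "k < N" "q k = 1"
  shows "s k = w"
proof (rule ccontr)
  assume "s k \<noteq> w"
  hence "(\<Prod>i<N. if s i = w then q i else 1 - q i) = 0"
    using assms(2,3) by (intro prod_zero) auto
  then show False using assms(1) by (simp add: joint_prob_def)
qed

definition tgt :: "(nat \<Rightarrow> pref) \<Rightarrow> nat \<Rightarrow> bool \<Rightarrow> bool" where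
  "tgt p i w = (case p i of PA \<Rightarrow> True | PB \<Rightarrow> False | PI \<Rightarrow> w)"

definition actp :: "(nat \<Rightarrow> strategy) \<Rightarrow> (nat \<Rightarrow> bool) \<Rightarrow> nat \<Rightarrow> action" where
  "actp \<sigma> s = (\<lambda>k. \<sigma> k (s k))"

lemma actp_upd: "actp (\<sigma>(i:=x)) s = (actp \<sigma> s)(i := x (s i))"
  by (auto simp: actp_def)

lemma payoff_eq: "payoff N \<pi> p q i \<sigma> =
  (\<Sum>w\<in>UNIV. \<Sum>s\<in>signal_profiles N. joint_prob N \<pi> q w s * sc N (actp \<sigma> s) (tgt p i w))"
  by (cases "p i") (simp_all add: payoff_def expect_def efficiency_def sc_def tgt_def actp_def)

lemma finite_sp: "finite (signal_profiles N)"
  by (simp add: signal_profiles_def finite_PiE)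

lemma payoff_le:
  assumes jnn: "\<And>w s. 0 \<le> joint_prob N \<pi> q w s"
    and h: "\<And>w s. s \<in> signal_profiles N \<Longrightarrow> joint_prob N \<pi> q w s \<noteq> 0 \<Longrightarrow>
       sc N (actp \<sigma> s) (tgt p i w) \<le> sc N (actp \<sigma>' s) (tgt p i w)"
  shows "payoff N \<pi> p q i \<sigma> \<le> payoff N \<pi> p q i \<sigma>'"
  unfolding payoff_eq
proof (intro sum_mono)
  fix w s assume s: "s \<in> signal_profiles N"
  show "joint_prob N \<pi> q w s * sc N (actp \<sigma> s) (tgt p i w) \<le> joint_prob N \<pi> q w s * sc N (actp \<sigma>' s) (tgt p i w)"
    using h[OF s] jnn[of w s] by (cases "joint_prob N \<pi> q w s = 0") (auto intro: mult_left_mono)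
qed

lemma payoff_less:
  assumes jnn: "\<And>w s. 0 \<le> joint_prob N \<pi> q w s"
    and h: "\<And>w s. s \<in> signal_profiles N \<Longrightarrow> joint_prob N \<pi> q w s \<noteq> 0 \<Longrightarrow>
       sc N (actp \<sigma> s) (tgt p i w) \<le> sc N (actp \<sigma>' s) (tgt p i w)"
    and s0: "s0 \<in> signal_profiles N" and jp: "0 < joint_prob N \<pi> q w0 s0"
    and lt: "sc N (actp \<sigma> s0) (tgt p i w0) < sc N (actp \<sigma>' s0) (tgt p i w0)"
  shows "payoff N \<pi> p q i \<sigma> < payoff N \<pi> p q i \<sigma>'"
  unfolding payoff_eq
proof (rule sum_strict_mono_ex1)
  have le: "joint_prob N \<pi> q w s * sc N (actp \<sigma> s) (tgt p i w) \<le> joint_prob N \<pi> q w s * sc N (actp \<sigma>' s) (tgt p i w)"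
    if s: "s \<in> signal_profiles N" for w s
    using h[OF s] jnn[of w s] by (cases "joint_prob N \<pi> q w s = 0") (auto intro: mult_left_mono)
  show "\<forall>w\<in>UNIV. (\<Sum>s\<in>signal_profiles N. joint_prob N \<pi> q w s * sc N (actp \<sigma> s) (tgt p i w))
       \<le> (\<Sum>s\<in>signal_profiles N. joint_prob N \<pi> q w s * sc N (actp \<sigma>' s) (tgt p i w))"
    using le by (auto intro: sum_mono)
  have "(\<Sum>s\<in>signal_profiles N. joint_prob N \<pi> q w0 s * sc N (actp \<sigma> s) (tgt p i w0))
       < (\<Sum>s\<in>signal_profiles N. joint_prob N \<pi> q w0 s * sc N (actp \<sigma>' s) (tgt p i w0))"
    by (rule sum_strict_mono_ex1) (use le finite_sp s0 jp lt in \<open>auto intro!: bexI[of _ s0]\<close>)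
  then show "\<exists>w\<in>UNIV. (\<Sum>s\<in>signal_profiles N. joint_prob N \<pi> q w s * sc N (actp \<sigma> s) (tgt p i w))
       < (\<Sum>s\<in>signal_profiles N. joint_prob N \<pi> q w s * sc N (actp \<sigma>' s) (tgt p i w))" by blast
qed simp




definition cst :: "action \<Rightarrow> strategy" where "cst a = (\<lambda>_. a)"
definition vs :: strategy where "vs = (\<lambda>b. V b)"

lemma cst_app[simp]: "cst a b = a" by (simp add: cst_def)
lemma vs_app[simp]: "vs b = V b" by (simp add: vs_def)

lemma eff_other: "k \<noteq> i \<Longrightarrow> \<not> isdel (act k) \<Longrightarrow> eff (act(i:=Y)) k = act k"
  by (cases "act k") (auto simp: eff_def)
lemma eff_self_nd: "\<not> isdel Y \<Longrightarrow> eff (act(i:=Y)) i = Y"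
  by (cases Y) (auto simp: eff_def)
lemma eff_self_del: "m \<noteq> i \<Longrightarrow> eff (act(i:=Delegate m)) i = act m"
  by (auto simp: eff_def)
lemma isdel_if: "\<not> isdel (if b then V x else Abstain)" "\<not> isdel (if b then V x else if c then V y else Abstain)"
  by auto
lemma case_V: "(case V b of VoteA \<Rightarrow> x1 | VoteB \<Rightarrow> x2 | Abstain \<Rightarrow> x3 | Delegate j \<Rightarrow> f j) = (if b then x1 else x2)"
  by (simp add: V_def)
lemma V_cases: "V b = VoteA \<longleftrightarrow> b" "V b = VoteB \<longleftrightarrow> \<not> b" by (auto simp: V_def)

lemma piv:
  assumes iN: "i < N" and m0: "m0 < N" "m0 \<noteq> i"
    and act: "\<forall>k<N. k \<noteq> i \<longrightarrow> act k = (if k = m0 then V (\<not>t) else Abstain)"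
  shows "sc N (act(i := V t)) t = 1/2"
    and "valid_action N i X \<Longrightarrow> X \<noteq> V t \<Longrightarrow> sc N (act(i := X)) t = 0"
proof -
  have N0: "0 < N" using iN by simp
  have gd: "good (act(i:=Y)) k" if "k < N" "valid_action N i Y" for k Y
  proof (cases "k = i")
    case True
    then show ?thesis using that act by (cases Y) (auto simp: good_def valid_action_def)
  next
    case False
    then show ?thesis using that act by (auto simp: good_def)
  qed
  have vV: "valid_action N i (V t)" by (simp add: valid_action_def V_def)
  have ek: "eff (act(i:=Y)) k = (if k = m0 then V (\<not>t) else Abstain)" if "k < N" "k \<noteq> i" for k Y
  proof -
    have "act k = (if k = m0 then V (\<not>t) else Abstain)" using act that by blast
    then show ?thesis using eff_other[OF that(2), of act Y] by simp
  qed
  have s1: "{k. k < N \<and> eff (act(i := V t)) k = V t} = {i}"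
    by (rule set_eqI subsetI, case_tac "x = i", insert iN eff_self_nd[of "V t" act i], auto simp: ek split: if_split_asm)
  have s2: "{k. k < N \<and> eff (act(i := V t)) k = V (\<not>t)} = {m0}"
    by (rule set_eqI subsetI, case_tac "x = i", insert iN m0 eff_self_nd[of "V t" act i], auto simp: ek split: if_split_asm)
  show "sc N (act(i := V t)) t = 1/2"
    using cnt_eff[of N "act(i := V t)", OF gd[OF _ vV]] s1 s2 by (simp add: sc_eq)
  assume vX: "valid_action N i X" and XV: "X \<noteq> V t"
  have effi: "eff (act(i := X)) i \<noteq> V t"
  proof (cases X)
    case (Delegate m)
    then have "m < N" "m \<noteq> i" using vX by (auto simp: valid_action_def)
    then show ?thesis using Delegate act eff_self_del[of m i act] by auto
  qed (use XV eff_self_nd in auto)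
  have t1: "{k. k < N \<and> eff (act(i := X)) k = V t} = {}"
    by (rule set_eqI subsetI, case_tac "x = i", insert effi, auto simp: ek split: if_split_asm)
  have t2: "m0 \<in> {k. k < N \<and> eff (act(i := X)) k = V (\<not>t)}"
    using m0 by (simp add: ek)
  have "card {k. k < N \<and> eff (act(i := X)) k = V (\<not>t)} > 0"
    using t2 by (auto simp: card_gt_0_iff)
  moreover have ce: "cnt N (act(i := X)) u = card {k. k < N \<and> eff (act(i := X)) k = V u}" for u
    using cnt_eff[of N "act(i := X)", OF gd[OF _ vX]] by blast
  ultimately have c1: "cnt N (act(i := X)) t = 0" "cnt N (act(i := X)) (\<not>t) > 0"
    using t1 by (simp_all only: ce) simp
  then show "sc N (act(i := X)) t = 0" by (simp add: sc_eq)
qed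

lemma des2:
  assumes iN: "i < N" and jN: "j < N" and m0: "m0 < N" and d: "i \<noteq> j" "m0 \<noteq> i" "m0 \<noteq> j"
    and act: "\<forall>k<N. k \<noteq> i \<longrightarrow> act k = (if k = j then V w else if k = m0 then V (\<not>w) else Abstain)"
  shows "sc N (act(i := Delegate j)) w = 1"
    and "valid_action N i X \<Longrightarrow> X \<noteq> V w \<Longrightarrow> X \<noteq> Delegate j \<Longrightarrow> sc N (act(i := X)) w < 1"
proof -
  have gd: "good (act(i:=Y)) k" if "k < N" "valid_action N i Y" for k Y
  proof (cases "k = i")
    case True
    then show ?thesis using that act by (cases Y) (auto simp: good_def valid_action_def)
  next
    case False
    then show ?thesis using that act by (auto simp: good_def)
  qed
  have vD: "valid_action N i (Delegate j)" using jN d by (simp add: valid_action_def)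
  have ek: "eff (act(i:=Y)) k = (if k = j then V w else if k = m0 then V (\<not>w) else Abstain)" if "k < N" "k \<noteq> i" for k Y
  proof -
    have "act k = (if k = j then V w else if k = m0 then V (\<not>w) else Abstain)" using act that by blast
    then show ?thesis using eff_other[OF that(2), of act Y] by simp
  qed
  have ei: "eff (act(i := Delegate j)) i = V w" using eff_self_del[of j i act] act jN d by auto
  have s1: "{k. k < N \<and> eff (act(i := Delegate j)) k = V w} = {i, j}"
    by (rule set_eqI subsetI, case_tac "x = i", insert ei iN jN d, auto simp: ek split: if_split_asm)
  have s2: "{k. k < N \<and> eff (act(i := Delegate j)) k = V (\<not>w)} = {m0}"
    by (rule set_eqI subsetI, case_tac "x = i", insert ei m0 d, auto simp: ek split: if_split_asm)
  show "sc N (act(i := Delegate j)) w = 1"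
    using cnt_eff[of N "act(i := Delegate j)", OF gd[OF _ vD]] s1 s2 d by (simp add: sc_eq)
  assume vX: "valid_action N i X" and XV: "X \<noteq> V w" and XD: "X \<noteq> Delegate j"
  have effi: "eff (act(i := X)) i \<noteq> V w"
  proof (cases X)
    case (Delegate m)
    then have "m < N" "m \<noteq> i" "m \<noteq> j" using vX XD by (auto simp: valid_action_def)
    then show ?thesis using Delegate act eff_self_del[of m i act] by auto
  qed (use XV eff_self_nd in auto)
  have t1: "{k. k < N \<and> eff (act(i := X)) k = V w} = {j}"
    by (rule set_eqI subsetI, case_tac "x = i", insert effi jN d, auto simp: ek split: if_split_asm)
  have t2: "m0 \<in> {k. k < N \<and> eff (act(i := X)) k = V (\<not>w)}"
    using m0 d by (simp add: ek)
  have "card {k. k < N \<and> eff (act(i := X)) k = V (\<not>w)} > 0"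
    using t2 by (auto simp: card_gt_0_iff)
  moreover have ce: "cnt N (act(i := X)) u = card {k. k < N \<and> eff (act(i := X)) k = V u}" for u
    using cnt_eff[of N "act(i := X)", OF gd[OF _ vX]] by blast
  ultimately have c1: "cnt N (act(i := X)) w = 1" "cnt N (act(i := X)) (\<not>w) > 0"
    using t1 by (simp_all only: ce) simp
  then show "sc N (act(i := X)) w < 1" by (simp add: sc_eq)
qed

lemma des3:
  assumes iN: "i < N" and eN: "e < N" and m0: "m0 < N" and d: "i \<noteq> e" "m0 \<noteq> i" "m0 \<noteq> e"
    and act: "\<forall>k<N. k \<noteq> i \<longrightarrow> act k = (if k = e \<or> k = m0 then V u else Abstain)"
    and vX: "valid_action N i X"
  shows "sc N (act(i := X)) u = 1"
proof -
  have gd: "good (act(i:=X)) k" if "k < N" for k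
  proof (cases "k = i")
    case True
    then show ?thesis using that act vX by (cases X) (auto simp: good_def valid_action_def)
  next
    case False
    then show ?thesis using that act by (auto simp: good_def)
  qed
  have ek: "eff (act(i:=X)) k = (if k = e \<or> k = m0 then V u else Abstain)" if "k < N" "k \<noteq> i" for k
  proof -
    have "act k = (if k = e \<or> k = m0 then V u else Abstain)" using act that by blast
    then show ?thesis using eff_other[OF that(2), of act X] by simp
  qed
  have s1: "{e, m0} \<subseteq> {k. k < N \<and> eff (act(i := X)) k = V u}"
    by (rule set_eqI subsetI, case_tac "x = i", insert eN m0 d, auto simp: ek split: if_split_asm)
  have "card {e, m0} \<le> card {k. k < N \<and> eff (act(i := X)) k = V u}"
    by (rule card_mono[OF _ s1]) simp
  hence c1: "2 \<le> card {k. k < N \<and> eff (act(i := X)) k = V u}" using d by simp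
  have s2: "{k. k < N \<and> eff (act(i := X)) k = V (\<not>u)} \<subseteq> {i}"
    by (rule set_eqI subsetI, case_tac "x = i", auto simp: ek split: if_split_asm)
  have "card {k. k < N \<and> eff (act(i := X)) k = V (\<not>u)} \<le> card {i}"
    by (rule card_mono[OF _ s2]) simp
  hence c2: "card {k. k < N \<and> eff (act(i := X)) k = V (\<not>u)} \<le> 1" by simp
  show ?thesis
    using cnt_eff[of N "act(i := X)", OF gd] c1 c2 by (simp add: sc_eq)
qed




locale LD =
  fixes N :: nat and \<pi> :: real and p :: "nat \<Rightarrow> pref" and q :: "nat \<Rightarrow> real"
  assumes pi0: "0 < \<pi>" and pi1: "\<pi> < 1"
    and prec: "\<forall>i<N. 1/2 \<le> q i \<and> q i \<le> 1"
    and ne_pos: "card {i. i < N \<and> p i = PI \<and> q i = 1} \<ge> 1"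
    and nU: "int (card {i. i < N \<and> p i = PI \<and> q i < 1})
               \<ge> int (card {i. i < N \<and> p i = PI \<and> q i = 1})
                 + \<bar>int (card {i. i < N \<and> p i = PA}) - int (card {i. i < N \<and> p i = PB})\<bar> + 1"
begin

definition "E = {i. i < N \<and> p i = PI \<and> q i = 1}"
definition "U = {i. i < N \<and> p i = PI \<and> q i < 1}"
definition "PAs = {i. i < N \<and> p i = PA}"
definition "PBs = {i. i < N \<and> p i = PB}"
definition "S0 = all_strategies N"
definition "S1 = elim_step N \<pi> p q S0"
definition "S2 = elim_step N \<pi> p q S1"
definition "SP = signal_profiles N"
definition sstar :: "nat \<Rightarrow> bool \<Rightarrow> bool \<Rightarrow> nat \<Rightarrow> bool" where
  "sstar i s0 w = (\<lambda>k. if k < N then (if k = i then s0 else w) else undefined)"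

lemma finE: "finite E" and finU: "finite U" and finPA: "finite PAs" and finPB: "finite PBs"
  by (auto simp: E_def U_def PAs_def PBs_def)

lemma cardE: "card E \<ge> 1" using ne_pos by (simp add: E_def)
lemma nU': "int (card U) \<ge> int (card E) + \<bar>int (card PAs) - int (card PBs)\<bar> + 1"
  using nU by (simp add: E_def U_def PAs_def PBs_def)

lemma EU_disj: "E \<inter> U = {}" by (auto simp: E_def U_def)

lemma N3: "3 \<le> N"
proof -
  have "card (E \<union> U) = card E + card U" using EU_disj finE finU by (simp add: card_Un_disjoint)
  moreover have "card (E \<union> U) \<le> card {..<N}" by (rule card_mono) (auto simp: E_def U_def)
  ultimately show ?thesis using cardE nU' by simp
qed

lemma avoid2: "\<exists>m. m < N \<and> m \<noteq> a \<and> m \<noteq> b"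
proof -
  have "card {a, b} \<le> 2" by (cases "a = b") auto
  hence "card {a, b} < card {..<N}" using N3 by simp
  have "\<not> {..<N} \<subseteq> {a,b}"
  proof
    assume "{..<N} \<subseteq> {a,b}"
    then have "card {..<N} \<le> card {a,b}" by (intro card_mono) auto
    then show False using \<open>card {a, b} < card {..<N}\<close> by linarith
  qed
  then obtain m where "m \<in> {..<N}" "m \<notin> {a,b}" by blast
  then show ?thesis by auto
qed

lemma jnn: "0 \<le> joint_prob N \<pi> q w s"
  by (rule joint_nonneg) (use pi0 pi1 prec in auto)

lemma jpos: assumes "\<forall>k<N. s k \<noteq> w \<longrightarrow> q k < 1" shows "0 < joint_prob N \<pi> q w s"
proof -
  have "\<forall>k<N. 0 < q k"
  proof (intro allI impI)
    fix k assume "k < N"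
    then have "1/2 \<le> q k" using prec by blast
    then show "0 < q k" by linarith
  qed
  then show ?thesis using joint_pos[OF pi0 pi1 _ assms] by blast
qed

lemma sstar_SP: "sstar i s0 w \<in> signal_profiles N"
  by (auto simp: sstar_def signal_profiles_def)

lemma jpos_sstar: "s0 = w \<or> q i < 1 \<Longrightarrow> 0 < joint_prob N \<pi> q w (sstar i s0 w)"
  by (rule jpos) (auto simp: sstar_def)

lemma cst_S0: "valid_action N i a \<Longrightarrow> cst a \<in> S0 i"
  by (simp add: S0_def all_strategies_def)
lemma vs_S0: "vs \<in> S0 i"
  by (simp add: S0_def all_strategies_def valid_action_def V_def)
lemma S0_valid: "x \<in> S0 i \<Longrightarrow> valid_action N i (x b)"
  by (simp add: S0_def all_strategies_def)

lemma elim_sub: "elim_step N \<pi> p q S i \<subseteq> S i" by (auto simp: elim_step_def)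
lemma S1_sub: "S1 i \<subseteq> S0 i" by (simp add: S1_def elim_sub)
lemma S2_sub: "S2 i \<subseteq> S1 i" by (simp add: S2_def elim_sub)

lemma val_prof:
  assumes "\<sigma> \<in> profiles N S" "\<forall>k<N. S k \<subseteq> S0 k"
  shows "validp N (actp \<sigma> s)"
  using assms unfolding validp_def profiles_def actp_def
  by (auto dest!: PiE_mem intro: S0_valid)

lemma weak_best:
  assumes H1: "\<forall>s\<in>signal_profiles N. \<forall>w. joint_prob N \<pi> q w s \<noteq> 0 \<longrightarrow> g (s i) = V (tgt p i w)"
  shows "payoff N \<pi> p q i (\<sigma>(i:=y)) \<le> payoff N \<pi> p q i (\<sigma>(i:=g))"
proof (rule payoff_le[OF jnn])
  fix w s assume "s \<in> signal_profiles N" "joint_prob N \<pi> q w s \<noteq> 0"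
  then have "g (s i) = V (tgt p i w)" using H1 by blast
  then show "sc N (actp (\<sigma>(i := y)) s) (tgt p i w) \<le> sc N (actp (\<sigma>(i := g)) s) (tgt p i w)"
    by (simp add: actp_upd W1)
qed

lemma weak_deleg:
  assumes "\<sigma> \<in> profiles N S" "\<forall>k<N. S k \<subseteq> S0 k" and iN: "i < N" and jE: "j \<in> E" and ji: "j \<noteq> i"
    and sj: "\<sigma> j = vs" and pi: "p i = PI"
  shows "payoff N \<pi> p q i (\<sigma>(i:=y)) \<le> payoff N \<pi> p q i (\<sigma>(i:=cst (Delegate j)))"
proof (rule payoff_le[OF jnn])
  fix w s assume "s \<in> signal_profiles N" "joint_prob N \<pi> q w s \<noteq> 0"
  then have "s j = w" using joint_expert jE by (auto simp: E_def)
  then have aj: "actp \<sigma> s j = V w" using sj by (simp add: actp_def)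
  have jN: "j < N" using jE by (simp add: E_def)
  show "sc N (actp (\<sigma>(i := y)) s) (tgt p i w) \<le> sc N (actp (\<sigma>(i := cst (Delegate j))) s) (tgt p i w)"
    using W2[OF val_prof[OF assms(1,2)] iN jN ji aj] pi by (simp add: actp_upd tgt_def)
qed

end



context LD begin

lemma prof_S0: "(\<lambda>k. if k < N then f k else undefined) \<in> profiles N S0 \<longleftrightarrow> (\<forall>k<N. f k \<in> S0 k)"
  by (auto simp: profiles_def PiE_def extensional_def Pi_def)

lemma tw_best:
  assumes H1: "\<forall>s\<in>signal_profiles N. \<forall>w. joint_prob N \<pi> q w s \<noteq> 0 \<longrightarrow> g (s i) = V (tgt p i w)"
    and "s \<in> signal_profiles N" "joint_prob N \<pi> q w s \<noteq> 0"
  shows "sc N (actp (\<sigma>(i := y)) s) (tgt p i w) \<le> sc N (actp (\<sigma>(i := g)) s) (tgt p i w)"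
proof -
  have "g (s i) = V (tgt p i w)" using H1 assms(2,3) by blast
  then show ?thesis by (simp add: actp_upd W1)
qed

lemma tw_deleg:
  assumes "\<sigma> \<in> profiles N S" "\<forall>k<N. S k \<subseteq> S0 k" and iN: "i < N" and jE: "j \<in> E" and ji: "j \<noteq> i"
    and sj: "\<sigma> j = vs" and pi: "p i = PI"
    and "s \<in> signal_profiles N" "joint_prob N \<pi> q w s \<noteq> 0"
  shows "sc N (actp (\<sigma>(i := y)) s) (tgt p i w) \<le> sc N (actp (\<sigma>(i := cst (Delegate j))) s) (tgt p i w)"
proof -
  have "s j = w" using joint_expert assms(8,9) jE by (auto simp: E_def)
  then have aj: "actp \<sigma> s j = V w" using sj by (simp add: actp_def)
  have jN: "j < N" using jE by (simp add: E_def)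
  show ?thesis
    using W2[OF val_prof[OF assms(1,2)] iN jN ji aj] pi by (simp add: actp_upd tgt_def)
qed

lemma S1_single:
  assumes iN: "i < N" and gS: "g \<in> S0 i"
    and H1: "\<forall>s\<in>signal_profiles N. \<forall>w. joint_prob N \<pi> q w s \<noteq> 0 \<longrightarrow> g (s i) = V (tgt p i w)"
    and H2: "\<forall>b. g b = V (tgt p i b)"
  shows "S1 i = {g}"
proof -
  have weak: "payoff N \<pi> p q i (\<sigma>(i:=y)) \<le> payoff N \<pi> p q i (\<sigma>(i:=g))" for \<sigma> y
    by (rule payoff_le[OF jnn]) (rule tw_best[OF H1])
  have gin: "g \<in> S1 i"
    unfolding S1_def elim_step_def weakly_dominates_def using gS weak by (auto simp: not_less)
  have "x = g" if xS: "x \<in> S1 i" for x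
  proof (rule ccontr)
    assume "x \<noteq> g"
    then obtain b0 where b0: "x b0 \<noteq> g b0" by auto
    define t where "t = tgt p i b0"
    obtain m0 where m0: "m0 < N" "m0 \<noteq> i" using avoid2[of i i] by auto
    define \<sigma> where "\<sigma> = (\<lambda>k. if k < N then (if k = m0 then cst (V (\<not>t)) else cst Abstain) else undefined)"
    have sp: "\<sigma> \<in> profiles N S0" unfolding \<sigma>_def prof_S0 by (auto intro: cst_S0 simp: valid_action_def V_def)
    have xS0: "x \<in> S0 i" using xS S1_sub by auto
    let ?s = "sstar i b0 b0"
    have act: "\<forall>k<N. k \<noteq> i \<longrightarrow> actp \<sigma> ?s k = (if k = m0 then V (\<not>t) else Abstain)"
      by (auto simp: \<sigma>_def actp_def)
    have si: "?s i = b0" using iN by (simp add: sstar_def)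
    have "payoff N \<pi> p q i (\<sigma>(i:=x)) < payoff N \<pi> p q i (\<sigma>(i:=g))"
    proof (rule payoff_less[OF jnn _ sstar_SP jpos_sstar])
      show "\<And>w s. s \<in> signal_profiles N \<Longrightarrow> joint_prob N \<pi> q w s \<noteq> 0 \<Longrightarrow>
        sc N (actp (\<sigma>(i := x)) s) (tgt p i w) \<le> sc N (actp (\<sigma>(i := g)) s) (tgt p i w)"
        by (rule tw_best[OF H1])
      have gb: "g b0 = V t" using H2 t_def by simp
      have "sc N ((actp \<sigma> ?s)(i := x b0)) t = 0"
        by (rule piv(2)[OF iN m0 act S0_valid[OF xS0]]) (use b0 gb in simp)
      moreover have "sc N ((actp \<sigma> ?s)(i := V t)) t = 1/2"
        by (rule piv(1)[OF iN m0 act])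
      ultimately show "sc N (actp (\<sigma>(i := x)) ?s) (tgt p i b0) < sc N (actp (\<sigma>(i := g)) ?s) (tgt p i b0)"
        using gb si by (simp add: actp_upd t_def)
    qed simp
    moreover have "\<forall>\<sigma>\<in>profiles N S0. payoff N \<pi> p q i (\<sigma>(i:=x)) \<le> payoff N \<pi> p q i (\<sigma>(i:=g))"
      using weak by blast
    ultimately have "weakly_dominates N \<pi> p q S0 i g x"
      unfolding weakly_dominates_def using sp by blast
    then show False using xS gS unfolding S1_def elim_step_def by blast
  qed
  then show ?thesis using gin by blast
qed

lemma S1_PA: "i < N \<Longrightarrow> p i = PA \<Longrightarrow> S1 i = {cst (V True)}"
  by (rule S1_single) (auto intro: cst_S0 simp: valid_action_def V_def tgt_def)

lemma S1_PB: "i < N \<Longrightarrow> p i = PB \<Longrightarrow> S1 i = {cst (V False)}"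
  by (rule S1_single) (auto intro: cst_S0 simp: valid_action_def V_def tgt_def)

lemma S1_E: "i \<in> E \<Longrightarrow> S1 i = {vs}"
proof -
  assume iE: "i \<in> E"
  have "\<forall>s\<in>signal_profiles N. \<forall>w. joint_prob N \<pi> q w s \<noteq> 0 \<longrightarrow> vs (s i) = V (tgt p i w)"
    using joint_expert iE by (auto simp: E_def tgt_def)
  then show ?thesis using iE by (intro S1_single) (auto intro: vs_S0 simp: E_def tgt_def)
qed

end



context LD begin

lemma UE_ne: "i \<in> U \<Longrightarrow> j \<in> E \<Longrightarrow> j \<noteq> i" using EU_disj by auto

lemma deleg_S1:
  assumes iU: "i \<in> U" and jE: "j \<in> E"
  shows "cst (Delegate j) \<in> S1 i"
proof -
  have iN: "i < N" and qi: "q i < 1" and pi: "p i = PI" using iU by (auto simp: U_def)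
  have jN: "j < N" using jE by (auto simp: E_def)
  have ji: "j \<noteq> i" using UE_ne iU jE by blast
  have dS: "cst (Delegate j) \<in> S0 i" using jN ji by (intro cst_S0) (simp add: valid_action_def)
  have "\<not> weakly_dominates N \<pi> p q S0 i y (cst (Delegate j))" if yS: "y \<in> S0 i" for y
  proof
    assume wd: "weakly_dominates N \<pi> p q S0 i y (cst (Delegate j))"
    show False
    proof (cases "y = cst (Delegate j)")
      case True then show False using wd unfolding weakly_dominates_def by auto
    next
      case False
      then obtain b0 where b0: "y b0 \<noteq> Delegate j" by (auto simp: cst_def)
      define w0 where "w0 = (y b0 \<noteq> V True)"
      have yw: "y b0 \<noteq> V w0" unfolding w0_def by (cases "y b0 = V True") auto
      obtain m0 where m0: "m0 < N" "m0 \<noteq> i" "m0 \<noteq> j" using avoid2[of i j] by auto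
      define \<sigma> where "\<sigma> = (\<lambda>k. if k < N then (if k = j then vs else if k = m0 then cst (V (\<not>w0)) else cst Abstain) else undefined)"
      have sp: "\<sigma> \<in> profiles N S0" unfolding \<sigma>_def prof_S0
        by (auto intro: cst_S0 vs_S0 simp: valid_action_def V_def)
      have sj: "\<sigma> j = vs" using jN by (simp add: \<sigma>_def)
      let ?s = "sstar i b0 w0"
      have act: "\<forall>k<N. k \<noteq> i \<longrightarrow> actp \<sigma> ?s k = (if k = j then V w0 else if k = m0 then V (\<not>w0) else Abstain)"
        by (auto simp: \<sigma>_def actp_def sstar_def)
      have si: "?s i = b0" using iN by (simp add: sstar_def)
      have "payoff N \<pi> p q i (\<sigma>(i:=y)) < payoff N \<pi> p q i (\<sigma>(i:=cst (Delegate j)))"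
      proof (rule payoff_less[OF jnn _ sstar_SP jpos_sstar])
        show "\<And>w s. s \<in> signal_profiles N \<Longrightarrow> joint_prob N \<pi> q w s \<noteq> 0 \<Longrightarrow>
          sc N (actp (\<sigma>(i := y)) s) (tgt p i w) \<le> sc N (actp (\<sigma>(i := cst (Delegate j))) s) (tgt p i w)"
          by (rule tw_deleg[OF sp _ iN jE ji sj pi]) auto
        have "sc N ((actp \<sigma> ?s)(i := y b0)) w0 < 1"
          by (rule des2(2)[OF iN jN m0(1) ji[symmetric] m0(2,3) act S0_valid[OF yS] yw b0])
        moreover have "sc N ((actp \<sigma> ?s)(i := Delegate j)) w0 = 1"
          by (rule des2(1)[OF iN jN m0(1) ji[symmetric] m0(2,3) act])
        ultimately show "sc N (actp (\<sigma>(i := y)) ?s) (tgt p i w0) < sc N (actp (\<sigma>(i := cst (Delegate j))) ?s) (tgt p i w0)"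
          using si pi by (simp add: actp_upd tgt_def)
      qed (simp add: qi)
      then show False using wd sp unfolding weakly_dominates_def by (meson not_le)
    qed
  qed
  then show ?thesis using dS unfolding S1_def elim_step_def by blast
qed

lemma cstV_S1:
  assumes iU: "i \<in> U"
  shows "cst (V v) \<in> S1 i"
proof -
  have iN: "i < N" and qi: "q i < 1" and pi: "p i = PI" using iU by (auto simp: U_def)
  obtain e where eE: "e \<in> E" using cardE by (metis card.empty not_one_le_zero equals0I)
  have eN: "e < N" and qe: "q e = 1" using eE by (auto simp: E_def)
  have ei: "e \<noteq> i" using UE_ne iU eE by blast
  have cS: "cst (V v) \<in> S0 i" by (intro cst_S0) (simp add: valid_action_def V_def)
  have "\<not> weakly_dominates N \<pi> p q S0 i y (cst (V v))" if yS: "y \<in> S0 i" for y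
  proof
    assume wd: "weakly_dominates N \<pi> p q S0 i y (cst (V v))"
    show False
    proof (cases "y = cst (V v)")
      case True then show False using wd unfolding weakly_dominates_def by auto
    next
      case False
      then obtain b0 where b0: "y b0 \<noteq> V v" by (auto simp: cst_def)
      obtain m0 where m0: "m0 < N" "m0 \<noteq> i" "m0 \<noteq> e" using avoid2[of i e] by auto
      define \<sigma> where "\<sigma> = (\<lambda>k. if k < N then (if k = e then (\<lambda>b. if b = v then Abstain else V (\<not>v))
          else if k = m0 then cst (V (\<not>v)) else cst Abstain) else undefined)"
      have sp: "\<sigma> \<in> profiles N S0" unfolding \<sigma>_def prof_S0
        by (auto intro: cst_S0 simp: valid_action_def V_def S0_def all_strategies_def)
      have tw: "sc N (actp (\<sigma>(i := y)) s) (tgt p i w) \<le> sc N (actp (\<sigma>(i := cst (V v))) s) (tgt p i w)"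
        if s: "s \<in> signal_profiles N" and j: "joint_prob N \<pi> q w s \<noteq> 0" for w s
      proof -
        have se: "s e = w" using joint_expert[OF j eN qe] .
        show ?thesis
        proof (cases "w = v")
          case True
          have act: "\<forall>k<N. k \<noteq> i \<longrightarrow> actp \<sigma> s k = (if k = m0 then V (\<not>v) else Abstain)"
            using se True m0 by (auto simp: \<sigma>_def actp_def)
          have h1: "sc N ((actp \<sigma> s)(i := V v)) v = 1/2" by (rule piv(1)[OF iN m0(1,2) act])
          have h2: "sc N ((actp \<sigma> s)(i := y (s i))) v \<le> 1/2"
          proof (cases "y (s i) = V v")
            case True then show ?thesis using h1 by simp
          next
            case False
            then show ?thesis using piv(2)[OF iN m0(1,2) act S0_valid[OF yS] False] by simp
          qed
          show ?thesis using h1 h2 True pi by (simp add: actp_upd tgt_def)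
        next
          case False
          have act: "\<forall>k<N. k \<noteq> i \<longrightarrow> actp \<sigma> s k = (if k = e \<or> k = m0 then V (\<not>v) else Abstain)"
            using se False m0 by (auto simp: \<sigma>_def actp_def)
          have h1: "sc N ((actp \<sigma> s)(i := V v)) (\<not>v) = 1"
            by (rule des3[OF iN eN m0(1) ei[symmetric] m0(2,3) act]) (simp add: valid_action_def V_def)
          have h2: "sc N ((actp \<sigma> s)(i := y (s i))) (\<not>v) = 1"
            by (rule des3[OF iN eN m0(1) ei[symmetric] m0(2,3) act S0_valid[OF yS]])
          have "w = (\<not>v)" using False by auto
          then show ?thesis using h1 h2 pi by (simp add: actp_upd tgt_def)
        qed
      qed
      let ?s = "sstar i b0 v"
      have act: "\<forall>k<N. k \<noteq> i \<longrightarrow> actp \<sigma> ?s k = (if k = m0 then V (\<not>v) else Abstain)"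
        using m0 by (auto simp: \<sigma>_def actp_def sstar_def)
      have si: "?s i = b0" using iN by (simp add: sstar_def)
      have jp: "0 < joint_prob N \<pi> q v ?s" by (rule jpos_sstar) (simp add: qi)
      have "payoff N \<pi> p q i (\<sigma>(i:=y)) < payoff N \<pi> p q i (\<sigma>(i:=cst (V v)))"
      proof (rule payoff_less[OF jnn tw sstar_SP jp])
        have "sc N ((actp \<sigma> ?s)(i := y b0)) v = 0"
          by (rule piv(2)[OF iN m0(1,2) act S0_valid[OF yS] b0])
        moreover have "sc N ((actp \<sigma> ?s)(i := V v)) v = 1/2"
          by (rule piv(1)[OF iN m0(1,2) act])
        ultimately show "sc N (actp (\<sigma>(i := y)) ?s) (tgt p i v) < sc N (actp (\<sigma>(i := cst (V v))) ?s) (tgt p i v)"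
          using si pi by (simp add: actp_upd tgt_def)
      qed
      then show False using wd sp unfolding weakly_dominates_def by (meson not_le)
    qed
  qed
  then show ?thesis using cS unfolding S1_def elim_step_def by blast
qed

end



context LD begin

lemma S2_single: "S1 i = {g} \<Longrightarrow> S2 i = {g}"
  unfolding S2_def elim_step_def weakly_dominates_def by auto

lemma S1_sub0: "\<forall>k<N. S1 k \<subseteq> S0 k" using S1_sub by blast

lemma deleg_S2:
  assumes iU: "i \<in> U" and jE: "j \<in> E"
  shows "cst (Delegate j) \<in> S2 i"
proof -
  have iN: "i < N" and pi: "p i = PI" using iU by (auto simp: U_def)
  have ji: "j \<noteq> i" using UE_ne iU jE by blast
  have weak: "payoff N \<pi> p q i (\<sigma>(i:=y)) \<le> payoff N \<pi> p q i (\<sigma>(i:=cst (Delegate j)))"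
    if sp: "\<sigma> \<in> profiles N S1" for \<sigma> y
  proof -
    have jN: "j < N" using jE by (simp add: E_def)
    have "\<sigma> j \<in> S1 j" using sp jN by (auto simp: profiles_def PiE_def Pi_def)
    then have sj: "\<sigma> j = vs" using S1_E[OF jE] by simp
    show ?thesis by (rule payoff_le[OF jnn]) (rule tw_deleg[OF sp S1_sub0 iN jE ji sj pi])
  qed
  show ?thesis using deleg_S1[OF iU jE] weak
    unfolding S2_def elim_step_def weakly_dominates_def by (auto simp: not_less)
qed

lemma classes: "k < N \<Longrightarrow> k \<in> PAs \<or> k \<in> PBs \<or> k \<in> E \<or> k \<in> U"
proof -
  assume k: "k < N"
  then have "q k \<le> 1" using prec by auto
  then show ?thesis using k by (cases "p k") (auto simp: PAs_def PBs_def E_def U_def)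
qed

lemma des4:
  assumes iU: "i \<in> U" and jE: "j \<in> E" and G: "Grp \<subseteq> U - {i}"
    and act: "\<forall>k<N. k \<noteq> i \<longrightarrow> act k = (if k \<in> PAs then VoteA else if k \<in> PBs then VoteB
        else if k \<in> E then V w0 else if k \<in> Grp then V (\<not>w0) else Delegate j)"
    and vX: "valid_action N i X" and XV: "X \<noteq> V w0"
    and XD: "\<forall>m. X = Delegate m \<longrightarrow> m \<notin> E \<and> (m \<in> PAs \<longrightarrow> \<not> w0) \<and> (m \<in> PBs \<longrightarrow> w0) \<and> (m \<in> U \<longrightarrow> m \<in> Grp)"
    and cards: "card (if w0 then PAs else PBs) + card E + (card U - card Grp - 1) = card (if w0 then PBs else PAs) + card Grp
       \<or> card (if w0 then PAs else PBs) + card E + (card U - card Grp - 1) + 1 = card (if w0 then PBs else PAs) + card Grp"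
  shows "sc N (act(i := X)) w0 < sc N (act(i := Delegate j)) w0"
proof -
  define A where "A = (if w0 then PAs else PBs) \<union> E \<union> (U - Grp - {i})"
  define B where "B = (if w0 then PBs else PAs) \<union> Grp"
  have iN: "i < N" and jN: "j < N" using iU jE by (auto simp: U_def E_def)
  have ji: "j \<noteq> i" using UE_ne iU jE by blast
  have dj: "\<not> isdel (act j)" "act j = V w0" using act jN ji jE EU_disj by (auto simp: PAs_def PBs_def E_def)
  have disj: "PAs \<inter> PBs = {}" "PAs \<inter> E = {}" "PBs \<inter> E = {}" "PAs \<inter> U = {}" "PBs \<inter> U = {}"
    by (auto simp: PAs_def PBs_def E_def U_def)
  have ek: "eff (act(i:=Y)) k = (if k \<in> PAs then VoteA else if k \<in> PBs then VoteB
        else if k \<in> E then V w0 else if k \<in> Grp then V (\<not>w0) else V w0)" if "k < N" "k \<noteq> i" for k Y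
  proof -
    have ak: "act k = (if k \<in> PAs then VoteA else if k \<in> PBs then VoteB
        else if k \<in> E then V w0 else if k \<in> Grp then V (\<not>w0) else Delegate j)" using act that by blast
    show ?thesis
    proof (cases "k \<in> PAs \<or> k \<in> PBs \<or> k \<in> E \<or> k \<in> Grp")
      case True
      then have "\<not> isdel (act k)" using ak by auto
      then show ?thesis using eff_other[OF that(2), of act Y] ak True by auto
    next
      case False
      then have "act k = Delegate j" using ak by auto
      then show ?thesis using False ji that(2) by (simp add: eff_def dj)
    qed
  qed
  have inA: "eff (act(i:=Y)) k = V w0 \<longleftrightarrow> k \<in> A" if "k < N" "k \<noteq> i" for k Y
  proof -
    have c: "k \<in> PAs \<or> k \<in> PBs \<or> k \<in> E \<or> k \<in> U" using classes that(1) .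
    show ?thesis using c disj G EU_disj that unfolding ek[OF that] A_def
      by (cases w0) (auto simp: V_def)
  qed
  have inB: "eff (act(i:=Y)) k = V (\<not>w0) \<longleftrightarrow> k \<in> B" if "k < N" "k \<noteq> i" for k Y
  proof -
    have c: "k \<in> PAs \<or> k \<in> PBs \<or> k \<in> E \<or> k \<in> U" using classes that(1) .
    show ?thesis using c disj G EU_disj that unfolding ek[OF that] B_def
      by (cases w0) (auto simp: V_def)
  qed
  have Asub: "A \<subseteq> {..<N} - {i}" and Bsub: "B \<subseteq> {..<N} - {i}"
    using G iU disj EU_disj by (auto simp: A_def B_def PAs_def PBs_def E_def U_def)
  have setY: "{k. k < N \<and> eff (act(i:=Y)) k = V t} =
      (if eff (act(i:=Y)) i = V t then insert i else id) {k. k < N \<and> k \<noteq> i \<and> eff (act(i:=Y)) k = V t}" for Y t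
    using iN by auto
  have SA: "{k. k < N \<and> k \<noteq> i \<and> eff (act(i:=Y)) k = V w0} = A" for Y
    using inA Asub by auto
  have SB: "{k. k < N \<and> k \<noteq> i \<and> eff (act(i:=Y)) k = V (\<not>w0)} = B" for Y
    using inB Bsub by auto
  have finA: "finite A" and finB: "finite B" using Asub Bsub finite_subset by blast+
  have iA: "i \<notin> A" and iB: "i \<notin> B" using Asub Bsub by auto
  have gdk: "good (act(i:=Y)) k" if "k < N" "k \<noteq> i" for k Y
  proof -
    have ak: "act k = (if k \<in> PAs then VoteA else if k \<in> PBs then VoteB
        else if k \<in> E then V w0 else if k \<in> Grp then V (\<not>w0) else Delegate j)" using act that by blast
    show ?thesis using ak dj ji that(2) by (auto simp: good_def)
  qed
  have gD: "good (act(i:=Delegate j)) k" if "k < N" for k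
    using gdk[OF that] dj ji by (cases "k = i") (auto simp: good_def)
  have effD: "eff (act(i:=Delegate j)) i = V w0" using eff_self_del[of j i act] ji dj by simp
  have XX: "good (act(i:=X)) i \<and> eff (act(i:=X)) i \<noteq> V w0 \<and>
      (eff (act(i:=X)) i = V (\<not>w0) \<or> eff (act(i:=X)) i \<noteq> V (\<not>w0))"
  proof (cases X)
    case (Delegate m)
    then have m: "m < N" "m \<noteq> i" using vX by (auto simp: valid_action_def)
    have mc: "m \<notin> E" "m \<in> PAs \<longrightarrow> \<not> w0" "m \<in> PBs \<longrightarrow> w0" "m \<in> U \<longrightarrow> m \<in> Grp" using XD Delegate by auto
    have am: "act m = (if m \<in> PAs then VoteA else if m \<in> PBs then VoteB
        else if m \<in> E then V w0 else if m \<in> Grp then V (\<not>w0) else Delegate j)" using act m by blast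
    have c: "m \<in> PAs \<or> m \<in> PBs \<or> m \<in> E \<or> m \<in> U" using classes m(1) .
    have nd: "\<not> isdel (act m)" using am c mc by auto
    have "act m \<noteq> V w0" using am c mc disj by (cases w0) (auto simp: V_def)
    then show ?thesis using Delegate nd m eff_self_del[of m i act] by (auto simp: good_def)
  qed (use XV in \<open>auto simp: good_def eff_def\<close>)
  have gX: "good (act(i:=X)) k" if "k < N" for k
    using gdk[OF that] XX by (cases "k = i") auto
  have cD1: "cnt N (act(i:=Delegate j)) w0 = card A + 1"
    using cnt_eff[OF gD, where t=w0] setY[of "Delegate j" w0] SA[of "Delegate j"] effD finA iA by simp
  have cD2: "cnt N (act(i:=Delegate j)) (\<not>w0) = card B"
    using cnt_eff[OF gD, where t="\<not>w0"] setY[of "Delegate j" "\<not>w0"] SB[of "Delegate j"] effD by simp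
  have cX1: "cnt N (act(i:=X)) w0 = card A"
    using cnt_eff[OF gX, where t=w0] setY[of X w0] SA[of X] XX by simp
  have cX2: "cnt N (act(i:=X)) (\<not>w0) = card B \<or> cnt N (act(i:=X)) (\<not>w0) = card B + 1"
    using cnt_eff[OF gX, where t="\<not>w0"] setY[of X "\<not>w0"] SB[of X] finB iB by (cases "eff (act(i:=X)) i = V (\<not>w0)") auto
  have cUG: "card (U - Grp - {i}) = card U - card Grp - 1"
  proof -
    have "U - Grp - {i} = (U - {i}) - Grp" by auto
    moreover have "card (U - {i}) = card U - 1" using iU finU by simp
    moreover have "card ((U - {i}) - Grp) = card (U - {i}) - card Grp"
      using G finU by (intro card_Diff_subset) (auto intro: finite_subset)
    ultimately show ?thesis by simp
  qed
  have cA: "card A = card (if w0 then PAs else PBs) + card E + (card U - card Grp - 1)"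
  proof -
    have f: "finite (if w0 then PAs else PBs)" using finPA finPB by simp
    have d1: "(if w0 then PAs else PBs) \<inter> E = {}" using disj by auto
    have d2: "((if w0 then PAs else PBs) \<union> E) \<inter> (U - Grp - {i}) = {}" using disj EU_disj by auto
    have "card A = card ((if w0 then PAs else PBs) \<union> E) + card (U - Grp - {i})"
      unfolding A_def using f finE finU d2 by (intro card_Un_disjoint) auto
    also have "card ((if w0 then PAs else PBs) \<union> E) = card (if w0 then PAs else PBs) + card E"
      using f finE d1 by (intro card_Un_disjoint) auto
    finally show ?thesis using cUG by simp
  qed
  have cB: "card B = card (if w0 then PBs else PAs) + card Grp"
  proof -
    have f: "finite (if w0 then PBs else PAs)" using finPA finPB by simp
    have "(if w0 then PBs else PAs) \<inter> Grp = {}" using G disj by auto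
    then show ?thesis unfolding B_def using f finU G by (intro card_Un_disjoint) (auto intro: finite_subset)
  qed
  have ab: "card A = card B \<or> card A + 1 = card B" using cards cA cB by simp
  show ?thesis
  proof (cases "card A = card B")
    case True
    have "sc N (act(i := Delegate j)) w0 = 1" unfolding sc_eq cD1 cD2 using True by simp
    moreover have "sc N (act(i := X)) w0 \<le> 1/2" using cX2 unfolding sc_eq cX1 using True by auto
    ultimately show ?thesis by simp
  next
    case False
    then have F: "card A + 1 = card B" using ab by simp
    have "sc N (act(i := Delegate j)) w0 = 1/2" unfolding sc_eq cD1 cD2 using F by simp
    moreover have "sc N (act(i := X)) w0 = 0" using cX2 unfolding sc_eq cX1 using F by auto
    ultimately show ?thesis by simp
  qed
qed

end



lemma subset_card_containing:
  assumes "finite S" "m \<in> S" "1 \<le> g" "g \<le> card S"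
  shows "\<exists>G\<subseteq>S. card G = g \<and> m \<in> G"
proof -
  have "g - 1 \<le> card (S - {m})" using assms by simp
  then obtain T where T: "T \<subseteq> S - {m}" "card T = g - 1" "finite T" by (rule obtain_subset_with_card_n)
  have "m \<notin> T" using T by auto
  then have "card (insert m T) = g" using T assms(3) by simp
  then show ?thesis using T assms(2) by (intro exI[of _ "insert m T"]) auto
qed

context LD begin

lemma prof_gen: "(\<lambda>k. if k < N then f k else undefined) \<in> profiles N S \<longleftrightarrow> (\<forall>k<N. f k \<in> S k)"
  by (auto simp: profiles_def PiE_def extensional_def Pi_def)

lemma S2_U:
  assumes iU: "i \<in> U" and xS: "x \<in> S2 i"
  shows "\<exists>j\<in>E. x b0 = Delegate j"
proof (rule ccontr)
  assume nX: "\<not> (\<exists>j\<in>E. x b0 = Delegate j)"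
  have iN: "i < N" and qi: "q i < 1" and pi: "p i = PI" using iU by (auto simp: U_def)
  obtain j where jE: "j \<in> E" using cardE by (metis card.empty not_one_le_zero equals0I)
  have jN: "j < N" using jE by (simp add: E_def)
  have ji: "j \<noteq> i" using UE_ne iU jE by blast
  have xS1: "x \<in> S1 i" using xS S2_sub by auto
  have vX: "valid_action N i (x b0)" using S0_valid xS1 S1_sub by blast
  define X where "X = x b0"
  define w0 where "w0 = (\<not> (X = VoteA \<or> (\<exists>m. X = Delegate m \<and> m \<in> PAs)))"
  have XV: "X \<noteq> V w0" unfolding w0_def by (cases X) (auto simp: V_def)
  define nw where "nw = card (if w0 then PAs else PBs)"
  define nn where "nn = card (if w0 then PBs else PAs)"
  define R where "R = int nw + int (card E) + int (card U) - 1 - int nn"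
  define g where "g = nat ((R + 1) div 2)"
  have nwn: "\<bar>int nw - int nn\<bar> = \<bar>int (card PAs) - int (card PBs)\<bar>"
    unfolding nw_def nn_def by (cases w0) auto
  have hU: "int (card U) \<ge> int (card E) + \<bar>int nw - int nn\<bar> + 1" using nU' nwn by simp
  have g1: "1 \<le> g" using hU cardE unfolding g_def R_def by auto
  have g2: "g + 1 \<le> card U" using hU unfolding g_def R_def by auto
  have geq: "int nw + int (card E) + (int (card U) - int g - 1) = int nn + int g
     \<or> int nw + int (card E) + (int (card U) - int g - 1) + 1 = int nn + int g"
    unfolding g_def R_def using hU by auto
  have cards: "nw + card E + (card U - g - 1) = nn + g \<or> nw + card E + (card U - g - 1) + 1 = nn + g"
    using geq g2 by linarith
  have finS: "finite (U - {i})" using finU by simp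
  have cS: "card (U - {i}) = card U - 1" using iU finU by simp
  obtain Grp where G: "Grp \<subseteq> U - {i}" "card Grp = g" "\<forall>m. X = Delegate m \<and> m \<in> U \<longrightarrow> m \<in> Grp"
  proof (cases "\<exists>m. X = Delegate m \<and> m \<in> U")
    case True
    then obtain m where m: "X = Delegate m" "m \<in> U" by blast
    have "m \<noteq> i" using vX m X_def by (simp add: valid_action_def)
    then have mS: "m \<in> U - {i}" using m by auto
    have "g \<le> card (U - {i})" using g2 cS by simp
    then obtain G where "G \<subseteq> U - {i}" "card G = g" "m \<in> G"
      using subset_card_containing[OF finS mS g1] by blast
    then show ?thesis using that m by auto
  next
    case False
    have "g \<le> card (U - {i})" using g2 cS by simp
    then obtain G where "G \<subseteq> U - {i}" "card G = g" by (rule obtain_subset_with_card_n)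
    then show ?thesis using that False by auto
  qed
  have XD: "\<forall>m. X = Delegate m \<longrightarrow> m \<notin> E \<and> (m \<in> PAs \<longrightarrow> \<not> w0) \<and> (m \<in> PBs \<longrightarrow> w0) \<and> (m \<in> U \<longrightarrow> m \<in> Grp)"
  proof (intro allI impI conjI)
    fix m assume m: "X = Delegate m"
    show "m \<notin> E" using nX m X_def by auto
    show "m \<in> PAs \<Longrightarrow> \<not> w0" using m unfolding w0_def by auto
    show "m \<in> PBs \<Longrightarrow> w0" using m unfolding w0_def by (auto simp: PAs_def PBs_def)
    show "m \<in> U \<Longrightarrow> m \<in> Grp" using m G(3) by auto
  qed
  define \<sigma> where "\<sigma> = (\<lambda>k. if k < N then (if k \<in> PAs then cst VoteA else if k \<in> PBs then cst VoteB
        else if k \<in> E then vs else if k \<in> Grp then cst (V (\<not>w0)) else cst (Delegate j)) else undefined)"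
  have sp: "\<sigma> \<in> profiles N S1" unfolding \<sigma>_def prof_gen
  proof (intro allI impI)
    fix k assume k: "k < N"
    have c: "k \<in> PAs \<or> k \<in> PBs \<or> k \<in> E \<or> k \<in> U" using classes k .
    show "(if k \<in> PAs then cst VoteA else if k \<in> PBs then cst VoteB
        else if k \<in> E then vs else if k \<in> Grp then cst (V (\<not>w0)) else cst (Delegate j)) \<in> S1 k"
    proof -
      have vA: "V True = VoteA" and vB: "V False = VoteB" by (simp_all add: V_def)
      show ?thesis
      proof (cases "k \<in> PAs")
        case True then show ?thesis using S1_PA[OF k] vA by (simp add: PAs_def)
      next
        case nA: False
        show ?thesis
        proof (cases "k \<in> PBs")
          case True then show ?thesis using S1_PB[OF k] vB nA by (simp add: PBs_def)
        next
          case nB: False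
          show ?thesis
          proof (cases "k \<in> E")
            case True then show ?thesis using S1_E[OF True] nA nB by simp
          next
            case nE: False
            then have kU: "k \<in> U" using c nA nB by blast
            show ?thesis using cstV_S1[OF kU] deleg_S1[OF kU jE] nA nB nE by simp
          qed
        qed
      qed
    qed
  qed
  have sj: "\<sigma> j = vs" using jN jE EU_disj by (auto simp: \<sigma>_def PAs_def PBs_def E_def)
  let ?s = "sstar i b0 w0"
  have act: "\<forall>k<N. k \<noteq> i \<longrightarrow> actp \<sigma> ?s k = (if k \<in> PAs then VoteA else if k \<in> PBs then VoteB
        else if k \<in> E then V w0 else if k \<in> Grp then V (\<not>w0) else Delegate j)"
    by (auto simp: \<sigma>_def actp_def sstar_def)
  have si: "?s i = b0" using iN by (simp add: sstar_def)
  have jp: "0 < joint_prob N \<pi> q w0 ?s" by (rule jpos_sstar) (simp add: qi)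
  have "payoff N \<pi> p q i (\<sigma>(i:=x)) < payoff N \<pi> p q i (\<sigma>(i:=cst (Delegate j)))"
  proof (rule payoff_less[OF jnn _ sstar_SP jp])
    show "\<And>w s. s \<in> signal_profiles N \<Longrightarrow> joint_prob N \<pi> q w s \<noteq> 0 \<Longrightarrow>
      sc N (actp (\<sigma>(i := x)) s) (tgt p i w) \<le> sc N (actp (\<sigma>(i := cst (Delegate j))) s) (tgt p i w)"
      by (rule tw_deleg[OF sp S1_sub0 iN jE ji sj pi])
    have "sc N ((actp \<sigma> ?s)(i := X)) w0 < sc N ((actp \<sigma> ?s)(i := Delegate j)) w0"
      by (rule des4[OF iU jE G(1) act _ XV XD]) (use vX X_def cards G(2) nw_def nn_def in auto)
    then show "sc N (actp (\<sigma>(i := x)) ?s) (tgt p i w0) < sc N (actp (\<sigma>(i := cst (Delegate j))) ?s) (tgt p i w0)"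
      using si pi X_def by (simp add: actp_upd tgt_def)
  qed
  moreover have "\<forall>\<sigma>\<in>profiles N S1. payoff N \<pi> p q i (\<sigma>(i:=x)) \<le> payoff N \<pi> p q i (\<sigma>(i:=cst (Delegate j)))"
  proof
    fix \<sigma> assume sp: "\<sigma> \<in> profiles N S1"
    have "\<sigma> j \<in> S1 j" using sp jN by (auto simp: profiles_def PiE_def Pi_def)
    then have sj: "\<sigma> j = vs" using S1_E[OF jE] by simp
    show "payoff N \<pi> p q i (\<sigma>(i:=x)) \<le> payoff N \<pi> p q i (\<sigma>(i:=cst (Delegate j)))"
      by (rule payoff_le[OF jnn]) (rule tw_deleg[OF sp S1_sub0 iN jE ji sj pi])
  qed
  ultimately have "weakly_dominates N \<pi> p q S1 i (cst (Delegate j)) x"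
    unfolding weakly_dominates_def using sp by blast
  then show False using xS deleg_S1[OF iU jE] unfolding S2_def elim_step_def by blast
qed

end



lemma eff_nd: "\<not> isdel (act k) \<Longrightarrow> eff act k = act k"
  by (cases "act k") (auto simp: eff_def)

context LD begin

lemma prof_upd: "\<sigma> \<in> profiles N S \<Longrightarrow> i < N \<Longrightarrow> x \<in> S i \<Longrightarrow> \<sigma>(i:=x) \<in> profiles N S"
  unfolding profiles_def using PiE_fun_upd[of x S i \<sigma> "{..<N}"] by (simp add: insert_absorb)

lemma prof_mem: "\<sigma> \<in> profiles N S \<Longrightarrow> k < N \<Longrightarrow> \<sigma> k \<in> S k"
  by (auto simp: profiles_def PiE_def Pi_def)

lemma S2_sub0: "\<forall>k<N. S2 k \<subseteq> S0 k" using S2_sub S1_sub by blast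

lemma outcome:
  assumes tp: "\<tau> \<in> profiles N S2" and s: "s \<in> signal_profiles N" and j: "joint_prob N \<pi> q w s \<noteq> 0"
  shows "sc N (actp \<tau> s) t = (if t = w then 1 else 0)"
proof -
  let ?a = "actp \<tau> s"
  have N0: "0 < N" using N3 by simp
  have ak: "(k \<in> PAs \<longrightarrow> ?a k = V True) \<and> (k \<in> PBs \<longrightarrow> ?a k = V False) \<and> (k \<in> E \<longrightarrow> ?a k = V w)
     \<and> (k \<in> U \<longrightarrow> (\<exists>j\<in>E. ?a k = Delegate j))" if k: "k < N" for k
  proof -
    have tk: "\<tau> k \<in> S2 k" using prof_mem[OF tp k] .
    have "k \<in> PAs \<Longrightarrow> ?a k = V True" using tk S2_single[OF S1_PA[OF k]] by (simp add: actp_def PAs_def)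
    moreover have "k \<in> PBs \<Longrightarrow> ?a k = V False" using tk S2_single[OF S1_PB[OF k]] by (simp add: actp_def PBs_def)
    moreover have "k \<in> E \<Longrightarrow> ?a k = V w"
    proof -
      assume kE: "k \<in> E"
      then have "s k = w" using joint_expert[OF j k] by (simp add: E_def)
      then show ?thesis using tk S2_single[OF S1_E[OF kE]] by (simp add: actp_def)
    qed
    moreover have "k \<in> U \<Longrightarrow> \<exists>j\<in>E. ?a k = Delegate j" using S2_U tk by (simp add: actp_def)
    ultimately show ?thesis by blast
  qed
  have gd: "good ?a k \<and> (k \<in> PAs \<longrightarrow> eff ?a k = V True) \<and> (k \<in> PBs \<longrightarrow> eff ?a k = V False)
     \<and> (k \<in> U \<longrightarrow> eff ?a k = V w)" if k: "k < N" for k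
  proof -
    have c: "k \<in> PAs \<or> k \<in> PBs \<or> k \<in> E \<or> k \<in> U" using classes k .
    show ?thesis
    proof (cases "k \<in> U")
      case True
      then obtain j where jE: "j \<in> E" and aj: "?a k = Delegate j" using ak[OF k] by blast
      have jN: "j < N" using jE by (simp add: E_def)
      have "?a j = V w" using ak[OF jN] jE by blast
      have "k \<notin> PAs" "k \<notin> PBs" using True by (auto simp: PAs_def PBs_def U_def)
      then show ?thesis using aj True \<open>?a j = V w\<close> by (auto simp: good_def eff_def)
    next
      case False
      then have nd: "\<not> isdel (?a k)" using c ak[OF k] by auto
      have e: "eff ?a k = ?a k" using eff_nd[of ?a k] nd by blast
      show ?thesis unfolding e using False ak[OF k] nd by (simp add: good_def)
    qed
  qed
  define Pw where "Pw = (if w then PAs else PBs)"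
  define Pn where "Pn = (if w then PBs else PAs)"
  have disj: "PAs \<inter> PBs = {}" "PAs \<inter> U = {}" "PBs \<inter> U = {}" "PAs \<inter> E = {}" "PBs \<inter> E = {}"
    by (auto simp: PAs_def PBs_def E_def U_def)
  have sub1: "Pw \<union> U \<subseteq> {k. k < N \<and> eff ?a k = V w}"
    using gd by (cases w) (auto simp: Pw_def PAs_def PBs_def U_def)
  have sub2: "{k. k < N \<and> eff ?a k = V (\<not>w)} \<subseteq> Pn"
  proof
    fix k assume "k \<in> {k. k < N \<and> eff ?a k = V (\<not>w)}"
    then have k: "k < N" and e: "eff ?a k = V (\<not>w)" by auto
    have c: "k \<in> PAs \<or> k \<in> PBs \<or> k \<in> E \<or> k \<in> U" using classes k .
    have "k \<in> E \<Longrightarrow> eff ?a k = V w" using ak[OF k] eff_nd[of ?a k] by auto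
    then show "k \<in> Pn" using c e gd[OF k] by (cases w) (auto simp: Pn_def)
  qed
  have finPw: "finite Pw" and finPn: "finite Pn" using finPA finPB by (auto simp: Pw_def Pn_def)
  have "card (Pw \<union> U) = card Pw + card U"
    using finPw finU disj by (intro card_Un_disjoint) (auto simp: Pw_def)
  moreover have ce: "cnt N ?a t = card {k. k < N \<and> eff ?a k = V t}" for t
    by (rule cnt_eff) (use gd in blast)
  moreover have "card (Pw \<union> U) \<le> cnt N ?a w"
    unfolding ce by (rule card_mono[OF _ sub1]) simp
  moreover have "cnt N ?a (\<not>w) \<le> card Pn"
    unfolding ce by (rule card_mono[OF finPn sub2])
  moreover have "int (card Pn) < int (card Pw) + int (card U)"
    using nU' by (cases w) (auto simp: Pw_def Pn_def)
  ultimately have "cnt N ?a (\<not>w) < cnt N ?a w" by linarith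
  then show ?thesis by (cases "t = w") (auto simp: sc_eq)
qed

lemma payoff_const:
  assumes "\<tau> \<in> profiles N S2"
  shows "payoff N \<pi> p q i \<tau> = (\<Sum>w\<in>UNIV. \<Sum>s\<in>signal_profiles N. joint_prob N \<pi> q w s * (if tgt p i w = w then 1 else 0))"
  unfolding payoff_eq
proof (intro sum.cong refl)
  fix w s assume s: "s \<in> signal_profiles N"
  show "joint_prob N \<pi> q w s * sc N (actp \<tau> s) (tgt p i w) = joint_prob N \<pi> q w s * (if tgt p i w = w then 1 else 0)"
  proof (cases "joint_prob N \<pi> q w s = 0")
    case False
    then show ?thesis using outcome[OF assms s False, of "tgt p i w"] by simp
  qed simp
qed

lemma efficiency_eq: "efficiency N \<pi> q \<sigma> = (\<Sum>w\<in>UNIV. \<Sum>s\<in>signal_profiles N. joint_prob N \<pi> q w s * sc N (actp \<sigma> s) w)"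
  by (simp add: efficiency_def expect_def sc_def actp_def)

lemma S2_fix: "elim_step N \<pi> p q S2 = S2"
proof (rule ext)
  fix i
  show "elim_step N \<pi> p q S2 i = S2 i"
  proof
    show "elim_step N \<pi> p q S2 i \<subseteq> S2 i" by (rule elim_sub)
    show "S2 i \<subseteq> elim_step N \<pi> p q S2 i"
    proof
      fix x assume xS: "x \<in> S2 i"
      have "\<not> weakly_dominates N \<pi> p q S2 i y x" if yS: "y \<in> S2 i" for y
      proof
        assume "weakly_dominates N \<pi> p q S2 i y x"
        then obtain \<sigma> where sp: "\<sigma> \<in> profiles N S2" and lt: "payoff N \<pi> p q i (\<sigma>(i:=x)) < payoff N \<pi> p q i (\<sigma>(i:=y))"
          unfolding weakly_dominates_def by blast
        have "payoff N \<pi> p q i (\<sigma>(i:=x)) = payoff N \<pi> p q i (\<sigma>(i:=y))"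
        proof (cases "i < N")
          case True
          show ?thesis using payoff_const[OF prof_upd[OF sp True xS]] payoff_const[OF prof_upd[OF sp True yS]] by simp
        next
          case False
          have v: "validp N (actp \<sigma> s)" for s using val_prof[OF sp S2_sub0] .
          have "sc N (actp (\<sigma>(i:=z)) s) t = sc N (actp \<sigma> s) t" for z s t
            unfolding actp_upd by (rule far_sc[OF v]) (use False in simp)
          then show ?thesis unfolding payoff_eq by simp
        qed
        then show False using lt by simp
      qed
      then show "x \<in> elim_step N \<pi> p q S2 i" using xS unfolding elim_step_def by blast
    qed
  qed
qed

lemma main: "\<exists>k. dominance_solvable_at N \<pi> p q k
           \<and> (\<forall>\<sigma>\<in>profiles N (reduced_game N \<pi> p q k). efficient N \<pi> q \<sigma>)"
proof (intro exI conjI)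
  have rg: "reduced_game N \<pi> p q 2 = S2"
    by (simp add: reduced_game_def numeral_2_eq_2 S2_def S1_def S0_def)
  obtain j where jE: "j \<in> E" using cardE by (metis card.empty not_one_le_zero equals0I)
  define \<sigma>0 where "\<sigma>0 = (\<lambda>k. if k < N then (if k \<in> PAs then cst (V True) else if k \<in> PBs then cst (V False)
        else if k \<in> E then vs else cst (Delegate j)) else undefined)"
  have s0: "\<sigma>0 \<in> profiles N S2" unfolding \<sigma>0_def prof_gen
  proof (intro allI impI)
    fix k assume k: "k < N"
    have c: "k \<in> PAs \<or> k \<in> PBs \<or> k \<in> E \<or> k \<in> U" using classes k .
    show "(if k \<in> PAs then cst (V True) else if k \<in> PBs then cst (V False)
        else if k \<in> E then vs else cst (Delegate j)) \<in> S2 k"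
    proof (cases "k \<in> PAs")
      case True then show ?thesis using S2_single[OF S1_PA[OF k]] by (simp add: PAs_def)
    next
      case nA: False
      show ?thesis
      proof (cases "k \<in> PBs")
        case True then show ?thesis using S2_single[OF S1_PB[OF k]] nA by (simp add: PBs_def)
      next
        case nB: False
        show ?thesis
        proof (cases "k \<in> E")
          case True then show ?thesis using S2_single[OF S1_E[OF True]] nA nB by simp
        next
          case nE: False
          then have kU: "k \<in> U" using c nA nB by blast
          show ?thesis using deleg_S2[OF kU jE] nA nB nE by simp
        qed
      qed
    qed
  qed
  show "dominance_solvable_at N \<pi> p q 2"
    unfolding dominance_solvable_at_def rg
    using S2_fix s0 payoff_const by auto
  show "\<forall>\<sigma>\<in>profiles N (reduced_game N \<pi> p q 2). efficient N \<pi> q \<sigma>"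
    unfolding rg efficient_def
  proof (intro ballI)
    fix \<sigma> \<tau> assume sp: "\<sigma> \<in> profiles N S2" and tp: "\<tau> \<in> profiles N (all_strategies N)"
    show "efficiency N \<pi> q \<tau> \<le> efficiency N \<pi> q \<sigma>"
      unfolding efficiency_eq
    proof (intro sum_mono)
      fix w s assume s: "s \<in> signal_profiles N"
      show "joint_prob N \<pi> q w s * sc N (actp \<tau> s) w \<le> joint_prob N \<pi> q w s * sc N (actp \<sigma> s) w"
      proof (cases "joint_prob N \<pi> q w s = 0")
        case False
        then have "sc N (actp \<sigma> s) w = 1" using outcome[OF sp s] by simp
        have "joint_prob N \<pi> q w s * sc N (actp \<tau> s) w \<le> joint_prob N \<pi> q w s * 1"
          by (rule mult_left_mono[OF sc_le1 jnn])
        then show ?thesis using \<open>sc N (actp \<sigma> s) w = 1\<close> by simp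
      qed simp
    qed
  qed
qed

end

theorem proposition5:
  fixes N :: nat and \<pi> :: real and p :: "nat \<Rightarrow> pref" and q :: "nat \<Rightarrow> real"
  assumes prior: "0 < \<pi>" "\<pi> < 1"
    and prec: "\<forall>i<N. 1/2 \<le> q i \<and> q i \<le> 1"
    and ne_pos: "card {i. i < N \<and> p i = PI \<and> q i = 1} \<ge> 1"
    and nU: "int (card {i. i < N \<and> p i = PI \<and> q i < 1})
               \<ge> int (card {i. i < N \<and> p i = PI \<and> q i = 1})
                 + \<bar>int (card {i. i < N \<and> p i = PA}) - int (card {i. i < N \<and> p i = PB})\<bar> + 1"
    and bal: "real (max (card {i. i < N \<and> p i = PI \<and> q i = 1} + card {i. i < N \<and> p i = PA})
                        (card {i. i < N \<and> p i = PI \<and> q i = 1} + card {i. i < N \<and> p i = PB}))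
              \<le> real N / 2"
  shows "\<exists>k. dominance_solvable_at N \<pi> p q k
           \<and> (\<forall>\<sigma>\<in>profiles N (reduced_game N \<pi> p q k). efficient N \<pi> q \<sigma>)"
proof -
  interpret LD N \<pi> p q using prior prec ne_pos nU by unfold_locales auto
  show ?thesis by (rule main)
qed



end
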